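(* Consider a concurrent singly linked list in which every node $X$ has a pointer field $X.\mathit{next}$ and an integer timestamp $X.\mathit{ts}$, and in which timestamps are drawn from a shared logical clock, each draw returning a value strictly greater than every previously drawn value. The operation $\mathrm{InsertAfter}(A,X)$ inserts a new node $X$ immediately after an existing node $A$ by repeating the following attempt until it succeeds: (i) read $N := A.\mathit{next}$; (ii) set $X.\mathit{ts}$ to a freshly drawn clock value and set $X.\mathit{next} := N$; (iii) perform $\mathrm{CAS}(A.\mathit{next}, N, X)$. Here $\mathrm{CAS}(p, \text{old}, \text{new})$ is an atomic compare-and-swap: it sets $p := \text{new}$ and succeeds if and only if $p = \text{old}$ at that moment. Suppose two requests $\mathrm{InsertAfter}(A,B)$ and $\mathrm{InsertAfter}(A,C)$ are executed simultaneously, and no other operation modifies $A.\mathit{next}$ while they run. Then the node that gets inserted first (the one whose compare-and-swap on $A.\mathit{next}$ succeeds first) has the lower final timestamp, and once both operations have completed it is farther away from $A$ in the list. Concretely, if $B$ is inserted first, then $B.\mathit{ts} < C.\mathit{ts}$ and the list contains the consecutive segment $A \to C \to B$.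
   Context: A node's "final timestamp" is the value $X.\mathit{ts}$ it holds after its successful insertion attempt. Failed compare-and-swap attempts are retried from step (i), so each retry draws a fresh timestamp. *)

theory Defs
  imports Main
begin

text \<open>Interleaving model of two concurrent InsertAfter(A,B) and InsertAfter(A,C)
operations. Pointers are 'n option (None = null). Each thread is identified by the
new node X it inserts. Phases: PRead = step (i), PPrep = step (ii), PCas = step (iii).\<close>

datatype phase = PRead | PPrep | PCas | PDone

record 'n conf =
  nxt :: "'n \<Rightarrow> 'n option"
  ts  :: "'n \<Rightarrow> int"
  clk :: int                    \<comment> \<open>largest value drawn so far from the shared clock\<close>
  ph  :: "'n \<Rightarrow> phase"
  loc :: "'n \<Rightarrow> 'n option"   \<comment> \<open>local variable N of thread inserting X\<close>

datatype 'n lbl = LRead 'n | LPrep 'n | LCasOk 'n | LCasFail 'n | LClock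

inductive step :: "'n \<Rightarrow> 'n \<Rightarrow> 'n \<Rightarrow> 'n conf \<Rightarrow> 'n lbl \<Rightarrow> 'n conf \<Rightarrow> bool"
  for A B C where
  read: "\<lbrakk> X \<in> {B, C}; ph s X = PRead \<rbrakk> \<Longrightarrow>
    step A B C s (LRead X) (s\<lparr>ph := (ph s)(X := PPrep), loc := (loc s)(X := nxt s A)\<rparr>)"
| prep: "\<lbrakk> X \<in> {B, C}; ph s X = PPrep; v > clk s \<rbrakk> \<Longrightarrow>
    step A B C s (LPrep X)
      (s\<lparr>ts := (ts s)(X := v), clk := v, nxt := (nxt s)(X := loc s X), ph := (ph s)(X := PCas)\<rparr>)"
| casok: "\<lbrakk> X \<in> {B, C}; ph s X = PCas; nxt s A = loc s X \<rbrakk> \<Longrightarrow>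
    step A B C s (LCasOk X) (s\<lparr>nxt := (nxt s)(A := Some X), ph := (ph s)(X := PDone)\<rparr>)"
| casfail: "\<lbrakk> X \<in> {B, C}; ph s X = PCas; nxt s A \<noteq> loc s X \<rbrakk> \<Longrightarrow>
    step A B C s (LCasFail X) (s\<lparr>ph := (ph s)(X := PRead)\<rparr>)"
| clock: "v > clk s \<Longrightarrow> step A B C s LClock (s\<lparr>clk := v\<rparr>)"
  \<comment> \<open>clock draws by unrelated operations (which do not touch the list)\<close>

inductive run :: "'n \<Rightarrow> 'n \<Rightarrow> 'n \<Rightarrow> 'n conf \<Rightarrow> 'n lbl list \<Rightarrow> 'n conf \<Rightarrow> bool"
  for A B C where
  run_nil: "run A B C s [] s"
| run_cons: "\<lbrakk> step A B C s l s'; run A B C s' ls s'' \<rbrakk> \<Longrightarrow> run A B C s (l # ls) s''"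

end

theory Submission
  imports Defs
begin

definition Inv :: "'n \<Rightarrow> 'n \<Rightarrow> 'n \<Rightarrow> 'n conf \<Rightarrow> bool" where
  "Inv A B C s \<longleftrightarrow>
    (ph s B \<in> {PCas, PDone} \<longrightarrow> ts s B \<le> clk s) \<and>
    (ph s C \<in> {PCas, PDone} \<longrightarrow> ts s C \<le> clk s) \<and>
    (nxt s A = Some B \<longrightarrow> ph s B = PDone) \<and>
    (nxt s A = Some C \<longrightarrow> ph s C = PDone) \<and>
    (ph s B = PDone \<and> ph s C \<noteq> PDone \<longrightarrow> nxt s A = Some B) \<and>
    (ph s C = PPrep \<and> loc s C = Some B \<longrightarrow> ph s B = PDone) \<and>
    (ph s C = PCas \<and> loc s C = Some B \<longrightarrow> ph s B = PDone \<and> ts s B < ts s C \<and> nxt s C = Some B) \<and>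
    (ph s B = PDone \<and> ph s C = PDone \<and> nxt s A = Some C \<longrightarrow> nxt s C = Some B \<and> ts s B < ts s C)"

lemma i_read_B: assumes "distinct [A, B, C]" "Inv A B C s" "ph s B = PRead"
  shows "Inv A B C (s\<lparr>ph := (ph s)(B := PPrep), loc := (loc s)(B := nxt s A)\<rparr>)"
proof -
  have d: "A \<noteq> B" "A \<noteq> C" "B \<noteq> C" "B \<noteq> A" "C \<noteq> A" "C \<noteq> B" "Some B \<noteq> Some C" "Some C \<noteq> Some B" using assms(1) by auto
  show ?thesis using assms(2-) unfolding Inv_def by (cases "ph s B"; cases "ph s C"; simp add: d)
qed

lemma i_prep_B: assumes "distinct [A, B, C]" "Inv A B C s" "ph s B = PPrep" "v > clk s"
  shows "Inv A B C (s\<lparr>ts := (ts s)(B := v), clk := v, nxt := (nxt s)(B := loc s B), ph := (ph s)(B := PCas)\<rparr>)"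
proof -
  have d: "A \<noteq> B" "A \<noteq> C" "B \<noteq> C" "B \<noteq> A" "C \<noteq> A" "C \<noteq> B" "Some B \<noteq> Some C" "Some C \<noteq> Some B" using assms(1) by auto
  have a: "ts s B \<le> clk s \<Longrightarrow> ts s B < v" "ts s C \<le> clk s \<Longrightarrow> ts s C < v"
    "ts s B \<le> clk s \<Longrightarrow> ts s B \<le> v" "ts s C \<le> clk s \<Longrightarrow> ts s C \<le> v"
    using assms by auto
  show ?thesis using assms(2-) a unfolding Inv_def by (cases "ph s B"; cases "ph s C"; simp add: d)
qed

lemma i_casok_B: assumes "distinct [A, B, C]" "Inv A B C s" "ph s B = PCas" "nxt s A = loc s B"
  shows "Inv A B C (s\<lparr>nxt := (nxt s)(A := Some B), ph := (ph s)(B := PDone)\<rparr>)"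
proof -
  have d: "A \<noteq> B" "A \<noteq> C" "B \<noteq> C" "B \<noteq> A" "C \<noteq> A" "C \<noteq> B" "Some B \<noteq> Some C" "Some C \<noteq> Some B" using assms(1) by auto
  show ?thesis using assms(2-) unfolding Inv_def by (cases "ph s B"; cases "ph s C"; simp add: d)
qed

lemma i_casfail_B: assumes "distinct [A, B, C]" "Inv A B C s" "ph s B = PCas"
  shows "Inv A B C (s\<lparr>ph := (ph s)(B := PRead)\<rparr>)"
proof -
  have d: "A \<noteq> B" "A \<noteq> C" "B \<noteq> C" "B \<noteq> A" "C \<noteq> A" "C \<noteq> B" "Some B \<noteq> Some C" "Some C \<noteq> Some B" using assms(1) by auto
  show ?thesis using assms(2-) unfolding Inv_def by (cases "ph s B"; cases "ph s C"; simp add: d)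
qed

lemma i_read_C: assumes "distinct [A, B, C]" "Inv A B C s" "ph s C = PRead"
  shows "Inv A B C (s\<lparr>ph := (ph s)(C := PPrep), loc := (loc s)(C := nxt s A)\<rparr>)"
proof -
  have d: "A \<noteq> B" "A \<noteq> C" "B \<noteq> C" "B \<noteq> A" "C \<noteq> A" "C \<noteq> B" "Some B \<noteq> Some C" "Some C \<noteq> Some B" using assms(1) by auto
  show ?thesis using assms(2-) unfolding Inv_def by (cases "ph s B"; cases "ph s C"; simp add: d)
qed

lemma i_prep_C: assumes "distinct [A, B, C]" "Inv A B C s" "ph s C = PPrep" "v > clk s"
  shows "Inv A B C (s\<lparr>ts := (ts s)(C := v), clk := v, nxt := (nxt s)(C := loc s C), ph := (ph s)(C := PCas)\<rparr>)"
proof -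
  have d: "A \<noteq> B" "A \<noteq> C" "B \<noteq> C" "B \<noteq> A" "C \<noteq> A" "C \<noteq> B" "Some B \<noteq> Some C" "Some C \<noteq> Some B" using assms(1) by auto
  have a: "ts s B \<le> clk s \<Longrightarrow> ts s B < v" "ts s C \<le> clk s \<Longrightarrow> ts s C < v"
    "ts s B \<le> clk s \<Longrightarrow> ts s B \<le> v" "ts s C \<le> clk s \<Longrightarrow> ts s C \<le> v"
    using assms by auto
  show ?thesis using assms(2-) a unfolding Inv_def by (cases "ph s B"; cases "ph s C"; simp add: d)
qed

lemma i_casok_C: assumes "distinct [A, B, C]" "Inv A B C s" "ph s C = PCas" "nxt s A = loc s C"
  shows "Inv A B C (s\<lparr>nxt := (nxt s)(A := Some C), ph := (ph s)(C := PDone)\<rparr>)"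
proof -
  have d: "A \<noteq> B" "A \<noteq> C" "B \<noteq> C" "B \<noteq> A" "C \<noteq> A" "C \<noteq> B" "Some B \<noteq> Some C" "Some C \<noteq> Some B" using assms(1) by auto
  show ?thesis using assms(2-) unfolding Inv_def by (cases "ph s B"; cases "ph s C"; simp add: d)
qed

lemma i_casfail_C: assumes "distinct [A, B, C]" "Inv A B C s" "ph s C = PCas"
  shows "Inv A B C (s\<lparr>ph := (ph s)(C := PRead)\<rparr>)"
proof -
  have d: "A \<noteq> B" "A \<noteq> C" "B \<noteq> C" "B \<noteq> A" "C \<noteq> A" "C \<noteq> B" "Some B \<noteq> Some C" "Some C \<noteq> Some B" using assms(1) by auto
  show ?thesis using assms(2-) unfolding Inv_def by (cases "ph s B"; cases "ph s C"; simp add: d)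
qed

lemma i_clock: assumes "Inv A B C s" "v > clk s"
  shows "Inv A B C (s\<lparr>clk := v\<rparr>)"
proof -
  have a: "ts s B \<le> clk s \<Longrightarrow> ts s B < v" "ts s C \<le> clk s \<Longrightarrow> ts s C < v"
    "ts s B \<le> clk s \<Longrightarrow> ts s B \<le> v" "ts s C \<le> clk s \<Longrightarrow> ts s C \<le> v"
    using assms by auto
  show ?thesis using assms a unfolding Inv_def by (cases "ph s B"; cases "ph s C"; simp)
qed

lemma step_inv:
  assumes "distinct [A, B, C]" "Inv A B C s" "step A B C s l s'"
  shows "Inv A B C s'"
  using assms(3)
proof cases
  case (read X)
  then show ?thesis using assms(1,2) i_read_B i_read_C by (metis insert_iff singletonD)
next
  case (prep X v)
  then show ?thesis using assms(1,2) i_prep_B i_prep_C by (metis insert_iff singletonD)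
next
  case (casok X)
  then show ?thesis using assms(1,2) i_casok_B i_casok_C by (metis insert_iff singletonD)
next
  case (casfail X)
  then show ?thesis using assms(1,2) i_casfail_B i_casfail_C by (metis insert_iff singletonD)
next
  case (clock v) then show ?thesis using assms(2) i_clock by metis
qed

lemma run_inv:
  "run A B C s tr s' \<Longrightarrow> distinct [A, B, C] \<Longrightarrow> Inv A B C s \<Longrightarrow> Inv A B C s'"
  by (induction rule: run.induct) (simp, meson step_inv)

lemma step_done: "step A B C s l s' \<Longrightarrow> ph s X = PDone \<Longrightarrow> ph s' X = PDone"
  by (cases rule: step.cases) auto

lemma run_done: "run A B C s tr s' \<Longrightarrow> ph s X = PDone \<Longrightarrow> ph s' X = PDone"
  by (induction rule: run.induct) (auto dest: step_done)

lemma step_ok: "step A B C s (LCasOk X) s' \<Longrightarrow> ph s' X = PDone \<and> ph s X = PCas \<and> nxt s' A = Some X"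
  by (cases rule: step.cases) auto

lemma run_ok: "run A B C s tr s' \<Longrightarrow> LCasOk X \<in> set tr \<Longrightarrow> ph s' X = PDone"
  by (induction rule: run.induct) (auto dest: step_ok run_done)

lemma run_append: "run A B C s (xs @ ys) s'' \<Longrightarrow> \<exists>s'. run A B C s xs s' \<and> run A B C s' ys s''"
proof (induction xs arbitrary: s)
  case Nil then show ?case by (auto intro: run.intros)
next
  case (Cons x xs)
  from Cons.prems obtain t where "step A B C s x t" "run A B C t (xs @ ys) s''"
    by (auto elim: run.cases)
  with Cons.IH show ?case by (meson run.intros)
qed

lemma step_both_done:
  "step A B C s l s' \<Longrightarrow> ph s B = PDone \<Longrightarrow> ph s C = PDone \<Longrightarrow>
   nxt s' = nxt s \<and> ts s' = ts s \<and> ph s' = ph s"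
  by (cases rule: step.cases) auto

lemma run_both_done:
  "run A B C s tr s' \<Longrightarrow> ph s B = PDone \<Longrightarrow> ph s C = PDone \<Longrightarrow>
   nxt s' = nxt s \<and> ts s' = ts s"
proof (induction rule: run.induct)
  case (run_nil s) then show ?case by simp
next
  case (run_cons s l s' ls s'')
  then show ?case using step_both_done[OF run_cons.hyps(1)] by auto
qed

theorem mainTheorem1:
  fixes A B C :: 'n and s0 s :: "'n conf" and tr :: "'n lbl list"
  assumes distinct: "distinct [A, B, C]"
    and new_nodes: "nxt s0 A \<noteq> Some B" "nxt s0 A \<noteq> Some C"
    and init: "ph s0 B = PRead" "ph s0 C = PRead"
    and exec: "run A B C s0 tr s"
    and finished: "ph s B = PDone" "ph s C = PDone"
    and B_first: "i < j" "j < length tr" "tr ! i = LCasOk B" "tr ! j = LCasOk C"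
  shows "ts s B < ts s C \<and> nxt s A = Some C \<and> nxt s C = Some B"
proof -
  have I0: "Inv A B C s0" using new_nodes init by (auto simp: Inv_def)
  have tr_eq: "tr = take j tr @ [LCasOk C] @ drop (Suc j) tr"
    using id_take_nth_drop[OF B_first(2)] B_first(4) by simp
  have rr: "run A B C s0 (take j tr @ ([LCasOk C] @ drop (Suc j) tr)) s"
    using exec tr_eq by simp
  then obtain s1 where r1: "run A B C s0 (take j tr) s1"
      and r2: "run A B C s1 ([LCasOk C] @ drop (Suc j) tr) s"
    using run_append[OF rr] by blast
  from r2 have "run A B C s1 (LCasOk C # drop (Suc j) tr) s" by simp
  then obtain s2 where st: "step A B C s1 (LCasOk C) s2" and r3: "run A B C s2 (drop (Suc j) tr) s"
    by (cases rule: run.cases) auto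
  have "take j tr ! i = LCasOk B" "i < length (take j tr)" using B_first by simp_all
  then have "LCasOk B \<in> set (take j tr)" by (metis nth_mem)
  then have bd1: "ph s1 B = PDone" using run_ok[OF r1] by blast
  have I1: "Inv A B C s1" using run_inv[OF r1 distinct I0] .
  have I2: "Inv A B C s2" using step_inv[OF distinct I1 st] .
  have ok: "ph s2 C = PDone" "ph s1 C = PCas" "nxt s2 A = Some C" using step_ok[OF st] by auto
  have bd2: "ph s2 B = PDone" using step_done[OF st bd1] .
  have fin: "nxt s2 C = Some B \<and> ts s2 B < ts s2 C" using I2 ok bd2 by (auto simp: Inv_def)
  have "nxt s = nxt s2 \<and> ts s = ts s2" using run_both_done[OF r3 bd2 ok(1)] .
  then show ?thesis using fin ok by auto
qed

end
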